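(* Let $G=(V,E)$ be a connected graph on $n\geq 4$ vertices with $V=\{p_1,\ldots,p_{n-1},q\}$, where $p_1-p_2-\cdots-p_{n-1}$ is a path in $G$. If $\psi_{n-1}(G)=2$ and $\psi_n(G)=0$, then $2\leq d(q)\leq \left\lceil\frac{n-3}{2}\right\rceil$.
   Context: All graphs are finite and simple. For a graph $G$ and a positive integer $k$, a $k$-path vertex cover ($k$-PVC) of $G$ is a set $S$ of vertices such that every path on $k$ vertices in $G$ contains at least one vertex of $S$ (if $G$ has no path on $k$ vertices, the empty set is a $k$-PVC). $\psi_k(G)$ denotes the minimum cardinality of a $k$-PVC of $G$. $d(v)$ is the degree of a vertex $v$. *)

theory Defs
  imports Complex_Main
begin

definition simple_graph :: "'a set \<Rightarrow> ('a \<Rightarrow> 'a \<Rightarrow> bool) \<Rightarrow> bool" where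
  "simple_graph V E \<longleftrightarrow> finite V \<and> (\<forall>x y. E x y \<longrightarrow> x \<in> V \<and> y \<in> V)
     \<and> (\<forall>x y. E x y \<longrightarrow> E y x) \<and> (\<forall>x. \<not> E x x)"

definition graph_connected :: "'a set \<Rightarrow> ('a \<Rightarrow> 'a \<Rightarrow> bool) \<Rightarrow> bool" where
  "graph_connected V E \<longleftrightarrow> (\<forall>x\<in>V. \<forall>y\<in>V. (x, y) \<in> {(a, b). E a b}\<^sup>*)"

text \<open>A path in G given as the list of its vertices (distinct, consecutive ones adjacent).
  A path on k vertices is such a list of length k.\<close>
definition is_path :: "'a set \<Rightarrow> ('a \<Rightarrow> 'a \<Rightarrow> bool) \<Rightarrow> 'a list \<Rightarrow> bool" where
  "is_path V E xs \<longleftrightarrow> xs \<noteq> [] \<and> distinct xs \<and> set xs \<subseteq> V \<and> successively E xs"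

definition is_kpvc :: "'a set \<Rightarrow> ('a \<Rightarrow> 'a \<Rightarrow> bool) \<Rightarrow> nat \<Rightarrow> 'a set \<Rightarrow> bool" where
  "is_kpvc V E k S \<longleftrightarrow> S \<subseteq> V \<and>
     (\<forall>xs. is_path V E xs \<and> length xs = k \<longrightarrow> set xs \<inter> S \<noteq> {})"

definition psi :: "'a set \<Rightarrow> ('a \<Rightarrow> 'a \<Rightarrow> bool) \<Rightarrow> nat \<Rightarrow> nat" where
  "psi V E k = Min (card ` {S. is_kpvc V E k S})"

definition degree :: "'a set \<Rightarrow> ('a \<Rightarrow> 'a \<Rightarrow> bool) \<Rightarrow> 'a \<Rightarrow> nat" where
  "degree V E v = card {u \<in> V. E v u}"

end

theory Submission
  imports Defs
begin

lemma succ_upt: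
  assumes "\<forall>i. a \<le> i \<and> i + 1 < b \<longrightarrow> E (p i) (p (i+1))"
  shows "successively E (map p [a..<b])"
  using assms
proof (induction b)
  case 0
  then show ?case by simp
next
  case (Suc b)
  show ?case
  proof (cases "a \<le> b")
    case True
    have "successively E (map p [a..<b])" using Suc by auto
    moreover have "[a..<Suc b] = [a..<b] @ [b]" using True by simp
    moreover have "a < b \<Longrightarrow> E (p (b - 1)) (p b)"
      using Suc.prems by (metis One_nat_def Suc_pred add.commute gr_implies_not0 le_add_diff_inverse2 less_Suc_eq nat_le_linear not_less plus_1_eq_Suc)
    moreover have "a < b \<Longrightarrow> last (map p [a..<b]) = p (b - 1)" by (simp add: last_map)
    ultimately have "a < b \<Longrightarrow> E (last (map p [a..<b])) (p b)" by simp
    show ?thesis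
    proof (cases "a = b")
      case True then show ?thesis by simp
    next
      case False
      then show ?thesis using \<open>successively E (map p [a..<b])\<close> \<open>a \<le> b\<close>
        \<open>a < b \<Longrightarrow> E (last (map p [a..<b])) (p b)\<close>
        by (simp add: successively_append_iff)
    qed
  next
    case False
    then show ?thesis by simp
  qed
qed

lemma ham_path:
  assumes inj: "inj_on p {1..m}" and qn: "q \<notin> p ` {1..m}"
    and V: "V = insert q (p ` {1..m})"
    and ch: "\<forall>i. 1 \<le> i \<and> i < m \<longrightarrow> E (p i) (p (i+1))"
    and im: "i \<le> m"
    and e1: "1 \<le> i \<Longrightarrow> E (p i) q"
    and e2: "i < m \<Longrightarrow> E q (p (i+1))"
  shows "is_path V E (map p [1..<i+1] @ q # map p [i+1..<m+1]) \<and>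
         length (map p [1..<i+1] @ q # map p [i+1..<m+1]) = m + 1"
proof -
  let ?A = "map p [1..<i+1]" and ?B = "map p [i+1..<m+1]"
  have dA: "distinct (map p [1..<m+1])"
  proof -
    have "set [1..<m+1] = {1..m}" by auto
    then show ?thesis using inj by (simp add: distinct_map)
  qed
  have split: "[1..<m+1] = [1..<i+1] @ [i+1..<m+1]"
  proof -
    have e: "m + 1 = (i+1) + (m - i)" using im by simp
    show ?thesis unfolding e by (rule upt_add_eq_append) simp
  qed
  have dist: "distinct (?A @ ?B)" using dA split by simp
  have qA: "q \<notin> set ?A" using qn im by auto
  have qB: "q \<notin> set ?B" using qn im by auto
  have sA: "successively E ?A" by (rule succ_upt) (use ch im in auto)
  have sB: "successively E ?B" by (rule succ_upt) (use ch im in auto)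
  have sqB: "successively E (q # ?B)"
  proof (cases "i < m")
    case True
    then have "[i+1..<m+1] = (i+1) # [i+2..<m+1]" by (simp add: upt_conv_Cons)
    then show ?thesis using sB e2 True by (simp add: successively_Cons)
  next
    case False
    then show ?thesis using im by simp
  qed
  have succ: "successively E (?A @ q # ?B)"
  proof (cases "1 \<le> i")
    case True
    have "last ?A = p i" using True by (simp add: last_map)
    then show ?thesis using sA sqB e1 True by (auto simp: successively_append_iff)
  next
    case False
    then show ?thesis using sqB by simp
  qed
  have setin: "set (?A @ q # ?B) \<subseteq> V" using V im by auto
  have l1: "length ?A = i" by simp
  have l2: "length ?B = m - i" by (simp del: upt_Suc)
  have len: "length (?A @ q # ?B) = m + 1" using im l1 l2 by (simp del: upt_Suc length_map)
  have "is_path V E (?A @ q # ?B)" unfolding is_path_def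
    using dist qA qB succ setin by (simp del: upt_Suc)
  then show ?thesis using len by blast
qed


lemma neighbor_in2:
  assumes "successively E xs" "q \<in> set xs" "length xs \<ge> 2" "\<forall>x y. E x y \<longrightarrow> E y x"
  shows "\<exists>u\<in>set xs. E q u"
proof -
  obtain ys zs where xs: "xs = ys @ q # zs" using assms(2) by (meson split_list)
  show ?thesis
  proof (cases "ys = []")
    case False
    then have "E (last ys) q" using assms(1) xs by (auto simp: successively_append_iff)
    then have "E q (last ys)" using assms(4) by blast
    moreover have "last ys \<in> set xs" using xs False by simp
    ultimately show ?thesis by blast
  next
    case True
    then obtain z zs' where "zs = z # zs'" using assms(3) xs by (cases zs) auto
    then show ?thesis using assms(1) xs True by (auto simp: successively_Cons)
  qed
qed

theorem mainTheorem12: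
  fixes V :: "'a set" and E :: "'a \<Rightarrow> 'a \<Rightarrow> bool" and p :: "nat \<Rightarrow> 'a" and q :: 'a and n :: nat
  assumes "simple_graph V E"
    and "graph_connected V E"
    and "n \<ge> 4"
    and "card V = n"
    and "V = insert q (p ` {1..n-1})"
    and "inj_on p {1..n-1}"
    and "q \<notin> p ` {1..n-1}"
    and "\<forall>i. 1 \<le> i \<and> i < n - 1 \<longrightarrow> E (p i) (p (i+1))"
    and "psi V E (n-1) = 2"
    and "psi V E n = 0"
  shows "2 \<le> degree V E q \<and> int (degree V E q) \<le> \<lceil>(real n - 3) / 2\<rceil>"
proof -
  define m where "m = n - 1"
  have nm: "n = m + 1" using assms(3) m_def by simp
  have sg: "finite V" "\<And>x y. E x y \<Longrightarrow> x \<in> V \<and> y \<in> V" "\<And>x y. E x y \<Longrightarrow> E y x" "\<And>x. \<not> E x x"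
    using assms(1) unfolding simple_graph_def by auto
  have V: "V = insert q (p ` {1..m})" using assms(5) m_def by simp
  have inj: "inj_on p {1..m}" using assms(6) m_def by simp
  have qn: "q \<notin> p ` {1..m}" using assms(7) m_def by simp
  have ch: "\<forall>i. 1 \<le> i \<and> i < m \<longrightarrow> E (p i) (p (i+1))" using assms(8) m_def by simp
  have finK: "\<And>k. finite (card ` {S. is_kpvc V E k S})"
  proof -
    fix k
    have "{S. is_kpvc V E k S} \<subseteq> Pow V" unfolding is_kpvc_def by auto
    then show "finite (card ` {S. is_kpvc V E k S})" using sg(1) by (meson finite_Pow_iff finite_imageI finite_subset)
  qed
  have Vk: "is_kpvc V E n V" unfolding is_kpvc_def
  proof (intro conjI allI impI)
    fix xs assume "is_path V E xs \<and> length xs = n"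
    then have "xs \<noteq> []" "set xs \<subseteq> V" unfolding is_path_def by auto
    then show "set xs \<inter> V \<noteq> {}" by (simp add: Int_absorb2)
  qed simp
  have noham: "\<And>xs. is_path V E xs \<Longrightarrow> length xs \<noteq> n"
  proof -
    fix xs assume xs: "is_path V E xs"
    have ne: "card ` {S. is_kpvc V E n S} \<noteq> {}" using Vk by auto
    have "Min (card ` {S. is_kpvc V E n S}) \<in> card ` {S. is_kpvc V E n S}"
      using Min_in[OF finK ne] .
    then obtain S where S: "is_kpvc V E n S" "card S = 0" using assms(10) unfolding psi_def by auto
    have "S \<subseteq> V" using S unfolding is_kpvc_def by auto
    then have "S = {}" using S sg(1) by (meson card_0_eq finite_subset)
    then show "length xs \<noteq> n" using S(1) xs unfolding is_kpvc_def by auto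
  qed
  have noedge: "\<And>i. i \<le> m \<Longrightarrow> (1 \<le> i \<longrightarrow> E (p i) q) \<Longrightarrow> (i < m \<longrightarrow> E q (p (i+1))) \<Longrightarrow> False"
    using ham_path[OF inj qn V ch] noham nm by blast
  define N where "N = {i\<in>{1..m}. E q (p i)}"
  have degN: "degree V E q = card N"
  proof -
    have "{u \<in> V. E q u} = p ` N" unfolding N_def using V sg(4) by auto
    moreover have "inj_on p N" using inj unfolding N_def by (rule inj_on_subset) auto
    ultimately show ?thesis unfolding degree_def by (simp add: card_image)
  qed
  have finN: "finite N" unfolding N_def by simp
  have N1: "1 \<notin> N"
    using noedge[of 0] m_def assms(3) unfolding N_def by auto
  have Nm: "m \<notin> N"
    using noedge[of m] sg(3) unfolding N_def by auto
  have Nc: "\<And>i. i \<in> N \<Longrightarrow> i + 1 \<notin> N"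
  proof -
    fix i assume i: "i \<in> N"
    show "i + 1 \<notin> N"
    proof
      assume i1: "i + 1 \<in> N"
      show False using i i1 noedge[of i] sg(3) unfolding N_def by auto
    qed
  qed
  have disj: "N \<inter> Suc ` N = {}" using Nc by fastforce
  have sub: "N \<union> Suc ` N \<subseteq> {2..m}" using N1 Nm unfolding N_def
    by (auto simp: le_less)
  have c1: "card (N \<union> Suc ` N) = 2 * card N"
    using disj finN by (simp add: card_Un_disjoint card_image)
  have c2: "card (N \<union> Suc ` N) \<le> card {2..m}" using sub by (intro card_mono) simp_all
  have ub: "2 * card N \<le> n - 2" using c1 c2 nm by simp
  have d1: "card N \<noteq> 0"
  proof
    assume c0: "card N = 0"
    have "p 1 \<in> V" using V assms(3) m_def by auto
    then have "(q, p 1) \<in> {(a, b). E a b}\<^sup>*" using assms(2) V unfolding graph_connected_def by auto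
    moreover have "q \<noteq> p 1" using qn assms(3) m_def by auto
    ultimately obtain y where "(q, y) \<in> {(a, b). E a b}" by (blast elim: converse_rtranclE)
    then have "E q y" by simp
    then have "y \<in> {u \<in> V. E q u}" using sg(2) by auto
    moreover have "finite {u \<in> V. E q u}" using sg(1) by simp
    ultimately have "degree V E q \<noteq> 0" unfolding degree_def by auto
    then show False using c0 degN by simp
  qed
  have d2: "card N \<noteq> 1"
  proof
    assume "card N = 1"
    then obtain i where Ni: "N = {i}" by (meson card_1_singletonE)
    have qi: "\<And>u. u \<in> V \<Longrightarrow> E q u \<Longrightarrow> u = p i"
    proof -
      fix u assume u: "u \<in> V" "E q u"
      then have "u \<noteq> q" using sg(4) by auto
      then obtain j where j: "j \<in> {1..m}" "u = p j" using u V by auto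
      then have "j \<in> N" using u unfolding N_def by simp
      then show "u = p i" using Ni j by simp
    qed
    have "i \<in> N" using Ni by simp
    then have i1m: "i \<in> {1..m}" unfolding N_def by simp
    then have piV: "p i \<in> V" using V by auto
    have qpi: "q \<noteq> p i" using qn i1m by auto
    have kp: "is_kpvc V E (n-1) {p i}"
      unfolding is_kpvc_def
    proof (intro conjI allI impI)
      show "{p i} \<subseteq> V" using piV by simp
      fix xs assume xs: "is_path V E xs \<and> length xs = n - 1"
      show "set xs \<inter> {p i} \<noteq> {}"
      proof
        assume "set xs \<inter> {p i} = {}"
        then have sxs: "set xs \<subseteq> V - {p i}" using xs unfolding is_path_def by auto
        have "card (set xs) = n - 1" using xs unfolding is_path_def by (simp add: distinct_card)
        moreover have "card (V - {p i}) = n - 1" using piV assms(4) sg(1) by simp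
        ultimately have "set xs = V - {p i}" using sxs sg(1) by (intro card_subset_eq) auto
        moreover note qpi
        ultimately have "q \<in> set xs" using V by auto
        moreover have "successively E xs" using xs unfolding is_path_def by simp
        moreover have "length xs \<ge> 2" using xs assms(3) by simp
        moreover have "\<forall>x y. E x y \<longrightarrow> E y x" using sg(3) by blast
        ultimately have "\<exists>u\<in>set xs. E q u" using neighbor_in2[of E xs q] by blast
        then obtain u where u: "u \<in> set xs" "E q u" by blast
        then have "u = p i" using qi sg(2) by auto
        then show False using u \<open>set xs \<inter> {p i} = {}\<close> by auto
      qed
    qed
    then have "card {p i} \<in> card ` {S. is_kpvc V E (n-1) S}" by blast
    then have "psi V E (n-1) \<le> card {p i}" unfolding psi_def by (rule Min_le[OF finK])
    then have "psi V E (n-1) \<le> 1" by simp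
    then show False using assms(9) by simp
  qed
  have lb: "2 \<le> degree V E q" using d1 d2 degN by simp
  have "int (degree V E q) \<le> \<lceil>(real n - 3) / 2\<rceil>"
  proof -
    have "2 * real (card N) \<le> real n - 2" using ub assms(3) by linarith
    then have "real (card N) - 1 < (real n - 3) / 2" by (simp add: field_simps)
    then show ?thesis using degN by (simp add: le_ceiling_iff)
  qed
  then show ?thesis using lb by simp
qed

end
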